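(* Let $P,Q,N>0$, let $\rho=P/N$, and let $A$ be a nonnegative random variable with a probability density function on $[0,\infty)$. For real $\alpha$ define the random variable $$J(\alpha,A)=\log\frac{P\left[A(P+Q)+N\right]}{(1-\alpha)^2APQ+(P+\alpha^2Q)N}.$$ Then for every $R\ge 0$, $$\min_{\alpha\in\mathbb{R}}\Pr\left[J(\alpha,A)\le R\right]=\Pr\left[A\le \frac{e^{R}-1}{\rho}\right],$$ and the minimum is attained at $\alpha^\ast=1-e^{-R}$. In particular this minimum equals the outage probability $\Pr[\log(1+A\rho)\le R]$ obtained when the decoder also knows the interference.
   Context: Interpretation: quasi-static channel $Y_i=\sqrt{A}(X_i+S_i)+Z_i$, $i=1,\dots,n$, with $Z_i$ i.i.d. $\mathcal{CN}(0,N)$, interference $S_i$ i.i.d. $\mathcal{CN}(0,Q)$ known noncausally to the encoder only, input average power constraint $P$, and a single fading coefficient $A$ (constant over the block, independent of $S$) known to the decoder but not the encoder. $J(\alpha,A)$ is the rate achieved, conditional on $A$, by dirty paper coding with $X\sim\mathcal{CN}(0,P)$ independent of $S$ and auxiliary variable $U=X+\alpha S$. Logarithms are natural. *)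

theory Defs
  imports "HOL-Probability.Probability"
begin

definition J :: "real \<Rightarrow> real \<Rightarrow> real \<Rightarrow> real \<Rightarrow> real \<Rightarrow> real" where
  "J P Q N \<alpha> a = ln ((P * (a * (P + Q) + N)) /
      ((1 - \<alpha>)\<^sup>2 * a * P * Q + (P + \<alpha>\<^sup>2 * Q) * N))"

end

theory Submission
  imports Defs
begin

lemma J_le:
  fixes P Q N a \<alpha> :: real
  assumes "P > 0" "Q > 0" "N > 0" "a \<ge> 0"
  shows "J P Q N \<alpha> a \<le> ln (1 + a * (P / N))"
proof -
  define D where "D = (1 - \<alpha>)\<^sup>2 * a * P * Q + (P + \<alpha>\<^sup>2 * Q) * N"
  have Dp: "D > 0" unfolding D_def using assms
    by (intro add_nonneg_pos) (auto intro!: mult_nonneg_nonneg mult_pos_pos add_pos_nonneg)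
  have np: "P * (a * (P + Q) + N) > 0" using assms by (auto intro!: mult_pos_pos add_nonneg_pos)
  have key: "(N + a*P) * D - N * (P * (a * (P + Q) + N)) = Q * (a*P*(1-\<alpha>) - \<alpha>*N)\<^sup>2"
    unfolding D_def by (simp add: algebra_simps power2_eq_square)
  have "P * (a * (P + Q) + N) / D \<le> 1 + a * (P / N)"
  proof -
    have "N * (P * (a * (P + Q) + N)) \<le> (N + a*P) * D"
      using key assms by (smt (verit) mult_nonneg_nonneg zero_le_power2)
    then show ?thesis using Dp assms by (simp add: field_simps)
  qed
  then show ?thesis unfolding J_def D_def[symmetric] using Dp np
    by (intro ln_mono) (auto intro!: divide_pos_pos)
qed

lemma J_star:
  fixes P Q N a R :: real
  assumes "P > 0" "Q > 0" "N > 0" "a \<ge> 0" "R \<ge> 0"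
  shows "J P Q N (1 - exp (- R)) a \<le> R \<longleftrightarrow> a \<le> (exp R - 1) / (P / N)"
proof -
  define e where "e = exp R"
  have ep: "e > 0" unfolding e_def by simp
  have em: "exp (- R) = 1 / e" unfolding e_def by (simp add: exp_minus field_simps)
  define D where "D = (1 - (1 - exp (- R)))\<^sup>2 * a * P * Q + (P + (1 - exp (- R))\<^sup>2 * Q) * N"
  have Dp: "D > 0" unfolding D_def using assms
    by (intro add_nonneg_pos) (auto intro!: mult_nonneg_nonneg mult_pos_pos add_pos_nonneg)
  have np: "P * (a * (P + Q) + N) > 0" using assms by (auto intro!: mult_pos_pos add_nonneg_pos)
  have "J P Q N (1 - exp (- R)) a \<le> R \<longleftrightarrow> P * (a * (P + Q) + N) / D \<le> e"
    unfolding J_def D_def[symmetric] e_def using Dp np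
    by (subst ln_le_cancel_iff[symmetric]) (auto intro!: divide_pos_pos)
  also have "\<dots> \<longleftrightarrow> P * (a * (P + Q) + N) \<le> e * D" using Dp by (simp add: field_simps)
  also have "e * D - P * (a * (P + Q) + N) = (N*(e-1) - a*P) * (P + Q*(1 - 1/e))"
    unfolding D_def em using ep by (simp add: field_simps power2_eq_square)
  then have "P * (a * (P + Q) + N) \<le> e * D \<longleftrightarrow> 0 \<le> (N*(e-1) - a*P) * (P + Q*(1 - 1/e))"
    by linarith
  also have "\<dots> \<longleftrightarrow> 0 \<le> N*(e-1) - a*P"
  proof -
    have "e \<ge> 1" unfolding e_def using assms by simp
    then have "P + Q*(1 - 1/e) > 0" using assms ep by (smt (verit) divide_le_eq_1 mult_nonneg_nonneg)
    then show ?thesis by (simp add: zero_le_mult_iff)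
  qed
  also have "\<dots> \<longleftrightarrow> a \<le> (exp R - 1) / (P / N)" using assms unfolding e_def by (simp add: field_simps)
  finally show ?thesis .
qed

theorem mainTheorem2:
  fixes M :: "'s measure" and A :: "'s \<Rightarrow> real" and f :: "real \<Rightarrow> ennreal"
    and P Q N R :: real
  assumes "prob_space M"
    and "P > 0" and "Q > 0" and "N > 0"
    and "\<forall>x\<in>space M. A x \<ge> 0"
    and "distributed M lborel A f"
    and "\<forall>a<0. f a = 0"
    and "R \<ge> 0"
  shows "(\<forall>\<alpha>::real. measure M {x \<in> space M. A x \<le> (exp R - 1) / (P / N)}
              \<le> measure M {x \<in> space M. J P Q N \<alpha> (A x) \<le> R})
       \<and> measure M {x \<in> space M. J P Q N (1 - exp (- R)) (A x) \<le> R}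
           = measure M {x \<in> space M. A x \<le> (exp R - 1) / (P / N)}
       \<and> (INF \<alpha>::real. measure M {x \<in> space M. J P Q N \<alpha> (A x) \<le> R})
           = measure M {x \<in> space M. A x \<le> (exp R - 1) / (P / N)}
       \<and> measure M {x \<in> space M. A x \<le> (exp R - 1) / (P / N)}
           = measure M {x \<in> space M. ln (1 + A x * (P / N)) \<le> R}"
proof -
  interpret prob_space M by fact
  have Am: "A \<in> borel_measurable M"
    using distributed_measurable[OF assms(6)] by (simp add: measurable_lborel1)
  define t where "t = (exp R - 1) / (P / N)"
  define S where "S = measure M {x \<in> space M. A x \<le> t}"
  have mono: "S \<le> measure M {x \<in> space M. J P Q N \<alpha> (A x) \<le> R}" for \<alpha>
  proof -
    have meas: "{x \<in> space M. J P Q N \<alpha> (A x) \<le> R} \<in> sets M"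
      unfolding J_def using Am by measurable
    have "{x \<in> space M. A x \<le> t} \<subseteq> {x \<in> space M. J P Q N \<alpha> (A x) \<le> R}"
    proof safe
      fix x assume x: "x \<in> space M" "A x \<le> t"
      have a0: "A x \<ge> 0" using assms(5) x by auto
      have "J P Q N (1 - exp (- R)) (A x) \<le> R" using J_star[OF assms(2-4) a0 assms(8)] x
        unfolding t_def by simp
      have "J P Q N \<alpha> (A x) \<le> ln (1 + A x * (P / N))" using J_le[OF assms(2-4) a0] .
      also have "\<dots> \<le> R"
      proof -
        have "A x * (P / N) \<le> exp R - 1" using x(2) assms(2,4) unfolding t_def
          by (simp add: field_simps)
        then have "1 + A x * (P / N) \<le> exp R" by simp
        moreover have "1 + A x * (P / N) > 0" using a0 assms(2,4) by (simp add: add_pos_nonneg)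
        ultimately show ?thesis by (metis ln_exp ln_le_cancel_iff exp_gt_zero)
      qed
      finally show "J P Q N \<alpha> (A x) \<le> R" .
    qed
    then show ?thesis unfolding S_def using meas by (rule finite_measure_mono)
  qed
  have star: "measure M {x \<in> space M. J P Q N (1 - exp (- R)) (A x) \<le> R} = S"
    unfolding S_def t_def
    by (rule arg_cong[where f="measure M"]) (use J_star[OF assms(2-4) _ assms(8)] assms(5) in auto)
  have inf: "(INF \<alpha>::real. measure M {x \<in> space M. J P Q N \<alpha> (A x) \<le> R}) = S"
  proof (rule antisym)
    show "(INF \<alpha>::real. measure M {x \<in> space M. J P Q N \<alpha> (A x) \<le> R}) \<le> S"
    proof -
      have "bdd_below (range (\<lambda>\<alpha>. measure M {x \<in> space M. J P Q N \<alpha> (A x) \<le> R}))"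
        by (rule bdd_belowI[where m=0]) auto
      then have "(INF \<alpha>::real. measure M {x \<in> space M. J P Q N \<alpha> (A x) \<le> R})
          \<le> measure M {x \<in> space M. J P Q N (1 - exp (- R)) (A x) \<le> R}"
        by (rule cINF_lower) simp
      then show ?thesis using star by simp
    qed
    show "S \<le> (INF \<alpha>::real. measure M {x \<in> space M. J P Q N \<alpha> (A x) \<le> R})"
      using mono by (intro cINF_greatest) auto
  qed
  have lnset: "S = measure M {x \<in> space M. ln (1 + A x * (P / N)) \<le> R}"
    unfolding S_def
  proof (rule arg_cong[where f="measure M"], safe)
    fix x assume x: "x \<in> space M"
    have a0: "A x \<ge> 0" using assms(5) x by auto
    have pos: "1 + A x * (P / N) > 0" using a0 assms(2,4) by (simp add: add_pos_nonneg)
    have "ln (1 + A x * (P / N)) \<le> R \<longleftrightarrow> 1 + A x * (P / N) \<le> exp R"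
      using pos by (metis ln_exp ln_le_cancel_iff exp_gt_zero)
    also have "\<dots> \<longleftrightarrow> A x \<le> t" unfolding t_def using assms(2,4) by (simp add: field_simps)
    finally have "ln (1 + A x * (P / N)) \<le> R \<longleftrightarrow> A x \<le> t" .
    then show "A x \<le> t \<Longrightarrow> ln (1 + A x * (P / N)) \<le> R"
      and "ln (1 + A x * (P / N)) \<le> R \<Longrightarrow> A x \<le> t" by auto
  qed
  have "\<forall>\<alpha>. S \<le> measure M {x \<in> space M. J P Q N \<alpha> (A x) \<le> R}" using mono by blast
  with star inf lnset have "(\<forall>\<alpha>. S \<le> measure M {x \<in> space M. J P Q N \<alpha> (A x) \<le> R})
     \<and> measure M {x \<in> space M. J P Q N (1 - exp (- R)) (A x) \<le> R} = S
     \<and> (INF \<alpha>::real. measure M {x \<in> space M. J P Q N \<alpha> (A x) \<le> R}) = S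
     \<and> S = measure M {x \<in> space M. ln (1 + A x * (P / N)) \<le> R}" by blast
  then show ?thesis unfolding S_def t_def .
qed

end
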